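(* Assume $x\mapsto\mathfrak S(x,z,\xi_i)$ is continuously differentiable for every $z$ and $i$, and define $\Delta_X^{(t)}\equiv\frac1m\sum_{i\in[m]}(\mathrm{id}-\mathbb E^{(0)})X_i\,\mathfrak S(\langle X_i,\mathrm u_X^{(t)}\rangle,\langle X_i,\mu_\ast\rangle,\xi_i)\in\mathbb R^n$. Then for every $t\ge1$, $$\|\mu^{(t)}-\mathrm u_X^{(t)}\|\le\|\eta_{[0:t)}\|_\infty\,\mathfrak M^{(t-1)}_{\mu^{(\cdot)},\mathrm u_X^{(\cdot)}}(X)\max_{s\in[1:t]}\|\Delta_X^{(s-1)}\|.$$
   Context: Let $m,n\ge1$. Let $X\in\mathbb R^{m\times n}$ be a random matrix with rows $X_1,\dots,X_m$; $\mu_\ast\in\mathbb R^n$, $\xi=(\xi_1,\dots,\xi_m)$, $\mathcal F:\mathbb R^2\to\mathbb R$, $Y_i=\mathcal F(\langle X_i,\mu_\ast\rangle,\xi_i)$; $\mathsf L:\mathbb R^2\to\mathbb R$ a loss, $\mathfrak S(x_0,z_0,\xi_0)\equiv\partial_1\mathsf L(x_0,\mathcal F(z_0,\xi_0))$, $\partial_1\mathfrak S$ its derivative in $x_0$. Gradient descent: $\mu^{(t)}=\mu^{(t-1)}-\frac{\eta_{t-1}}{m}X^\top\mathfrak S(X\mu^{(t-1)},X\mu_\ast,\xi)$ (componentwise) with initialization $\mu^{(0)}$ and step sizes $\eta_s>0$. $X$ is independent of $(\mu^{(0)},\mu_\ast,\xi)$ and $\mathbb E^{(0)}$ is expectation conditional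 on $(\mu^{(0)},\mu_\ast,\xi)$ (assume all expectations finite). Theoretical gradient descent: $\mathrm u_X^{(0)}=\mu^{(0)}$, $\mathrm u_X^{(t)}=\mathrm u_X^{(t-1)}-\frac{\eta_{t-1}}{m}\mathbb E^{(0)}X^\top\mathfrak S(X\mathrm u_X^{(t-1)},X\mu_\ast,\xi)$. Let $U\sim\mathrm{Unif}[0,1]$, $\pi_m\sim\mathrm{Unif}\{1,\dots,m\}$ be independent of everything. For $\mathrm u,\mathrm v$: $M_{\mathrm u,\mathrm v}(X)\equiv\mathbb E_{U,\pi_m}\partial_1\mathfrak S(\langle X_{\pi_m},U\mathrm u+(1-U)\mathrm v\rangle,\langle X_{\pi_m},\mu_\ast\rangle,\xi_{\pi_m})X_{\pi_m}X_{\pi_m}^\top$ (expectation over $U,\pi_m$ only), and for sequences $\mathfrak M^{(t)}_{\mathrm u^{(\cdot)},\mathrm v^{(\cdot)}}(X)\equiv1+\max_{\tau\in[0:t]}\sum_{s\in[0:\tau]}\prod_{r\in[s:\tau]}\|I_n-\eta_rM_{\mathrm u^{(r)},\mathrm v^{(r)}}(X)\|_{op}$. $[a:b]=\{a,\dots,b\}$, $\|\eta_{[0:t)}\|_\infty=\max_{0\le s<t}\eta_s$. *)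

theory Defs
  imports "HOL-Probability.Probability"
begin

definition frakS :: "(real \<Rightarrow> real \<Rightarrow> real) \<Rightarrow> (real \<Rightarrow> real \<Rightarrow> real) \<Rightarrow> real \<Rightarrow> real \<Rightarrow> real \<Rightarrow> real" where
  "frakS L F x z \<xi> = deriv (\<lambda>a. L a (F z \<xi>)) x"

definition dfrakS :: "(real \<Rightarrow> real \<Rightarrow> real) \<Rightarrow> (real \<Rightarrow> real \<Rightarrow> real) \<Rightarrow> real \<Rightarrow> real \<Rightarrow> real \<Rightarrow> real" where
  "dfrakS L F x z \<xi> = deriv (\<lambda>a. frakS L F a z \<xi>) x"

definition Svec :: "(real \<Rightarrow> real \<Rightarrow> real) \<Rightarrow> (real \<Rightarrow> real \<Rightarrow> real) \<Rightarrow> real^'n^'m \<Rightarrow> real^'n \<Rightarrow> real^'m \<Rightarrow> real^'n \<Rightarrow> real^'m" where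
  "Svec L F X mustar xi u = (\<chi> i. frakS L F ((X $ i) \<bullet> u) ((X $ i) \<bullet> mustar) (xi $ i))"

primrec gd :: "(real \<Rightarrow> real \<Rightarrow> real) \<Rightarrow> (real \<Rightarrow> real \<Rightarrow> real) \<Rightarrow> real^'n^'m \<Rightarrow> real^'n \<Rightarrow> real^'m
    \<Rightarrow> (nat \<Rightarrow> real) \<Rightarrow> real^'n \<Rightarrow> nat \<Rightarrow> real^'n" where
  "gd L F X mustar xi eta mu0 0 = mu0"
| "gd L F X mustar xi eta mu0 (Suc t) =
     gd L F X mustar xi eta mu0 t
     - (eta t / real CARD('m)) *\<^sub>R (transpose X *v Svec L F X mustar xi (gd L F X mustar xi eta mu0 t))"

text \<open>Theoretical gradient descent u_X^(t); the conditional expectation E^(0) given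
  (mu0, mustar, xi) is the integral over the law of the random matrix Xr (X independent of them).\<close>
primrec theo_gd :: "'w measure \<Rightarrow> ('w \<Rightarrow> real^'n^'m) \<Rightarrow> (real \<Rightarrow> real \<Rightarrow> real) \<Rightarrow> (real \<Rightarrow> real \<Rightarrow> real)
    \<Rightarrow> real^'n \<Rightarrow> real^'m \<Rightarrow> (nat \<Rightarrow> real) \<Rightarrow> real^'n \<Rightarrow> nat \<Rightarrow> real^'n" where
  "theo_gd M Xr L F mustar xi eta mu0 0 = mu0"
| "theo_gd M Xr L F mustar xi eta mu0 (Suc t) =
     theo_gd M Xr L F mustar xi eta mu0 t
     - (eta t / real CARD('m)) *\<^sub>R
         (\<integral>w. transpose (Xr w) *v Svec L F (Xr w) mustar xi (theo_gd M Xr L F mustar xi eta mu0 t) \<partial>M)"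

definition Delta :: "'w measure \<Rightarrow> ('w \<Rightarrow> real^'n^'m) \<Rightarrow> (real \<Rightarrow> real \<Rightarrow> real) \<Rightarrow> (real \<Rightarrow> real \<Rightarrow> real)
    \<Rightarrow> real^'n \<Rightarrow> real^'m \<Rightarrow> (nat \<Rightarrow> real) \<Rightarrow> real^'n \<Rightarrow> 'w \<Rightarrow> nat \<Rightarrow> real^'n" where
  "Delta M Xr L F mustar xi eta mu0 w t =
    (let u = theo_gd M Xr L F mustar xi eta mu0 t in
     (1 / real CARD('m)) *\<^sub>R
       (\<Sum>i\<in>UNIV. frakS L F ((Xr w $ i) \<bullet> u) ((Xr w $ i) \<bullet> mustar) (xi $ i) *\<^sub>R (Xr w $ i)
          - (\<integral>w'. frakS L F ((Xr w' $ i) \<bullet> u) ((Xr w' $ i) \<bullet> mustar) (xi $ i) *\<^sub>R (Xr w' $ i) \<partial>M)))"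

definition outer :: "real^'n \<Rightarrow> real^'n^'n" where
  "outer x = (\<chi> j k. x $ j * x $ k)"

text \<open>M_{u,v}(X): expectation over U ~ Unif[0,1] and pi_m ~ Unif{1..m}.\<close>
definition Mmat :: "(real \<Rightarrow> real \<Rightarrow> real) \<Rightarrow> (real \<Rightarrow> real \<Rightarrow> real) \<Rightarrow> real^'n^'m \<Rightarrow> real^'n \<Rightarrow> real^'m
    \<Rightarrow> real^'n \<Rightarrow> real^'n \<Rightarrow> real^'n^'n" where
  "Mmat L F X mustar xi u v =
    (1 / real CARD('m)) *\<^sub>R
      (\<Sum>i\<in>UNIV. integral {0..1::real}
         (\<lambda>U. dfrakS L F ((X $ i) \<bullet> (U *\<^sub>R u + (1 - U) *\<^sub>R v)) ((X $ i) \<bullet> mustar) (xi $ i) *\<^sub>R outer (X $ i)))"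

definition frakM :: "(real \<Rightarrow> real \<Rightarrow> real) \<Rightarrow> (real \<Rightarrow> real \<Rightarrow> real) \<Rightarrow> real^'n^'m \<Rightarrow> real^'n \<Rightarrow> real^'m
    \<Rightarrow> (nat \<Rightarrow> real) \<Rightarrow> (nat \<Rightarrow> real^'n) \<Rightarrow> (nat \<Rightarrow> real^'n) \<Rightarrow> nat \<Rightarrow> real" where
  "frakM L F X mustar xi eta us vs t =
    1 + Max ((\<lambda>\<tau>. \<Sum>s\<in>{0..\<tau>}. \<Prod>r\<in>{s..\<tau>}.
               onorm (\<lambda>x. (mat 1 - eta r *\<^sub>R Mmat L F X mustar xi (us r) (vs r)) *v x)) ` {0..t})"

end

theory Submission
  imports Defs
begin

lemma outer_mult:
  fixes x d :: "real^'n"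
  shows "(r *\<^sub>R outer x) *v d = (r * (x \<bullet> d)) *\<^sub>R x"
  by (simp add: vec_eq_iff matrix_vector_mult_def outer_def inner_vec_def sum_distrib_left
      sum_distrib_right algebra_simps)

lemma mvt_vec:
  fixes f :: "real \<Rightarrow> real" and x p q :: "real^'n"
  assumes dif: "\<And>y. f differentiable (at y)" and cont: "continuous_on UNIV (deriv f)"
  shows "integral {0..1} (\<lambda>U. deriv f (x \<bullet> (U *\<^sub>R p + (1 - U) *\<^sub>R q)) *\<^sub>R outer x) *v (p - q)
     = (f (x \<bullet> p) - f (x \<bullet> q)) *\<^sub>R x"
proof -
  define h where "h U = x \<bullet> (U *\<^sub>R p + (1 - U) *\<^sub>R q)" for U :: real
  define c where "c = x \<bullet> p - x \<bullet> q"
  have hU: "h U = x \<bullet> q + U * c" for U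
    by (simp add: h_def c_def inner_add_right algebra_simps)
  have dh: "(h has_real_derivative c) (at U)" for U
    unfolding hU by (auto intro!: derivative_eq_intros)
  have df: "(f has_real_derivative deriv f y) (at y)" for y
    using dif DERIV_deriv_iff_real_differentiable by blast
  have dfh: "((\<lambda>U. f (h U)) has_real_derivative deriv f (h U) * c) (at U)" for U
    using DERIV_chain2[OF df dh] .
  have int1: "((\<lambda>U. deriv f (h U) * c) has_integral (f (h 1) - f (h 0))) {0..1}"
    apply (rule fundamental_theorem_of_calculus)
     apply simp
    using dfh has_real_derivative_iff_has_vector_derivative
    by (metis has_vector_derivative_at_within)
  have int2: "((\<lambda>U. (deriv f (h U) * c) *\<^sub>R x) has_integral (f (h 1) - f (h 0)) *\<^sub>R x) {0..1}"
    using has_integral_scaleR_left[OF int1] .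
  have conth: "continuous_on {0..1} h"
    unfolding hU by (intro continuous_intros)
  have contg: "continuous_on {0..1} (\<lambda>U. deriv f (h U) *\<^sub>R outer x)"
    by (intro continuous_intros continuous_on_compose2[OF cont conth]) auto
  have integ: "(\<lambda>U. deriv f (h U) *\<^sub>R outer x) integrable_on {0..1}"
    using integrable_continuous_interval[OF contg] by simp
  have bl: "bounded_linear (\<lambda>A::real^'n^'n. A *v (p - q))"
  proof -
    have "linear (\<lambda>A::real^'n^'n. A *v (p - q))"
      by (rule linearI) (simp_all add: vec_eq_iff matrix_vector_mult_def sum.distrib[symmetric] sum_distrib_left algebra_simps)
    then show ?thesis by (simp add: linear_conv_bounded_linear)
  qed
  have "integral {0..1} (\<lambda>U. deriv f (h U) *\<^sub>R outer x) *v (p - q)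
      = integral {0..1} ((\<lambda>A. A *v (p - q)) \<circ> (\<lambda>U. deriv f (h U) *\<^sub>R outer x))"
    using integral_linear[OF integ bl] by simp
  also have "\<dots> = integral {0..1} (\<lambda>U. (deriv f (h U) * c) *\<^sub>R x)"
    by (simp add: o_def outer_mult c_def inner_diff_right)
  also have "\<dots> = (f (h 1) - f (h 0)) *\<^sub>R x"
    using int2 by (rule integral_unique)
  finally show ?thesis by (simp add: h_def)
qed

lemma transpose_sum:
  fixes X :: "real^'n^'m" and v :: "real^'m"
  shows "transpose X *v v = (\<Sum>i\<in>UNIV. v $ i *\<^sub>R X $ i)"
  by (simp add: vec_eq_iff matrix_vector_mult_def transpose_def sum_component mult.commute)

lemma vm_sum:
  fixes X :: "real^'n^'m" and v :: "real^'m"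
  shows "v v* X = (\<Sum>i\<in>UNIV. v $ i *\<^sub>R X $ i)"
  by (simp add: vec_eq_iff vector_matrix_mult_def sum_component mult.commute)

lemma alg:
  fixes mu u T1 T2 E :: "'a::real_vector"
  shows "mu - (c/m) *\<^sub>R T1 - (u - (c/m) *\<^sub>R E) = (mu - u) - c *\<^sub>R ((1/m) *\<^sub>R (T1 - T2)) - c *\<^sub>R ((1/m) *\<^sub>R (T2 - E))"
  by (simp add: algebra_simps)

lemma mv_sum:
  fixes B :: "'i \<Rightarrow> real^'n^'n" and d :: "real^'n"
  shows "(sum B I) *v d = (\<Sum>i\<in>I. B i *v d)"
  by (induct I rule: infinite_finite_induct) (simp_all add: matrix_vector_mult_add_rdistrib)

lemma mv_zero: "(0::real^'n^'n) *v d = 0"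
  by (simp add: vec_eq_iff matrix_vector_mult_def)

lemma bl_mv: "bounded_linear (\<lambda>x. (A::real^'n^'n) *v x)"
  by (simp add: linear_conv_bounded_linear)

theorem mainTheorem10:
  fixes M :: "'w measure" and Xr :: "'w \<Rightarrow> real^'n^'m"
    and L F :: "real \<Rightarrow> real \<Rightarrow> real"
    and mu0 mustar :: "real^'n" and xi :: "real^'m"
    and eta :: "nat \<Rightarrow> real" and t :: nat and w :: 'w
  assumes "prob_space M"
    and "Xr \<in> borel_measurable M"
    and "\<And>s. eta s > 0"
    and "\<And>z i x. (\<lambda>a. frakS L F a z (xi $ i)) differentiable (at x)"
    and "\<And>z i. continuous_on UNIV (\<lambda>a. dfrakS L F a z (xi $ i))"
    and "\<And>s i. integrable M (\<lambda>w'. frakS L F ((Xr w' $ i) \<bullet> theo_gd M Xr L F mustar xi eta mu0 s)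
                    ((Xr w' $ i) \<bullet> mustar) (xi $ i) *\<^sub>R (Xr w' $ i))"
    and "w \<in> space M"
    and "t \<ge> 1"
  shows "norm (gd L F (Xr w) mustar xi eta mu0 t - theo_gd M Xr L F mustar xi eta mu0 t)
    \<le> Max (eta ` {0..<t})
      * frakM L F (Xr w) mustar xi eta (gd L F (Xr w) mustar xi eta mu0) (theo_gd M Xr L F mustar xi eta mu0) (t - 1)
      * Max ((\<lambda>s. norm (Delta M Xr L F mustar xi eta mu0 w (s - 1))) ` {1..t})"
proof -
  define X where "X = Xr w"
  define mu where "mu = gd L F X mustar xi eta mu0"
  define u where "u = theo_gd M Xr L F mustar xi eta mu0"
  define m where "m = real CARD('m)"
  define S where "S v i = frakS L F (X $ i \<bullet> v) (X $ i \<bullet> mustar) (xi $ i)" for v i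
  define Mm where "Mm r = Mmat L F X mustar xi (mu r) (u r)" for r
  define A where "A r = mat 1 - eta r *\<^sub>R Mm r" for r
  define a where "a r = onorm (\<lambda>x. A r *v x)" for r
  define D where "D s = Delta M Xr L F mustar xi eta mu0 w s" for s
  define e where "e t = mu t - u t" for t
  define E where "E s = (\<Sum>i\<in>UNIV. \<integral>w'. frakS L F ((Xr w' $ i) \<bullet> u s) ((Xr w' $ i) \<bullet> mustar) (xi $ i) *\<^sub>R (Xr w' $ i) \<partial>M)" for s
  have mu_S: "mu (Suc t) = mu t - (eta t / m) *\<^sub>R (\<Sum>i\<in>UNIV. S (mu t) i *\<^sub>R X $ i)" for t
    by (simp add: mu_def m_def transpose_sum vm_sum Svec_def S_def)
  have u_S: "u (Suc t) = u t - (eta t / m) *\<^sub>R E t" for t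
  proof -
    have "(\<integral>w'. transpose (Xr w') *v Svec L F (Xr w') mustar xi (u t) \<partial>M) = E t"
      unfolding E_def transpose_sum Svec_def vec_lambda_beta
      by (rule Bochner_Integration.integral_sum) (use assms(6) u_def in auto)
    then show ?thesis by (simp add: u_def m_def)
  qed
  have D_eq: "D s = (1/m) *\<^sub>R ((\<Sum>i\<in>UNIV. S (u s) i *\<^sub>R X $ i) - E s)" for s
    by (simp add: D_def Delta_def Let_def S_def E_def X_def u_def m_def sum_subtractf)
  have M_eq: "Mm t *v e t = (1/m) *\<^sub>R (\<Sum>i\<in>UNIV. (S (mu t) i - S (u t) i) *\<^sub>R X $ i)" for t
  proof -
    have "Mm t *v e t = (1/m) *\<^sub>R (\<Sum>i\<in>UNIV. integral {0..1::real}
         (\<lambda>U. dfrakS L F ((X $ i) \<bullet> (U *\<^sub>R mu t + (1 - U) *\<^sub>R u t)) ((X $ i) \<bullet> mustar) (xi $ i) *\<^sub>R outer (X $ i)) *v (mu t - u t))"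
      unfolding Mm_def Mmat_def e_def m_def
      by (simp add: scaleR_matrix_vector_assoc[symmetric] mv_sum)
    also have "\<dots> = (1/m) *\<^sub>R (\<Sum>i\<in>UNIV. (S (mu t) i - S (u t) i) *\<^sub>R X $ i)"
      unfolding dfrakS_def S_def
      by (subst mvt_vec) (use assms(4,5)[unfolded dfrakS_def] in auto)
    finally show ?thesis .
  qed
  have step: "e (Suc t) = A t *v e t - eta t *\<^sub>R D t" for t
  proof -
    define T1 where "T1 = (\<Sum>i\<in>UNIV. S (mu t) i *\<^sub>R X $ i)"
    define T2 where "T2 = (\<Sum>i\<in>UNIV. S (u t) i *\<^sub>R X $ i)"
    have "A t *v e t = e t - eta t *\<^sub>R (Mm t *v e t)"
      by (simp add: A_def matrix_vector_mult_diff_rdistrib scaleR_matrix_vector_assoc)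
    also have "Mm t *v e t = (1/m) *\<^sub>R (T1 - T2)"
      unfolding M_eq T1_def T2_def by (simp add: sum_subtractf scaleR_diff_left)
    finally have h1: "A t *v e t = e t - eta t *\<^sub>R ((1/m) *\<^sub>R (T1 - T2))" .
    have "e (Suc t) = mu t - (eta t/m) *\<^sub>R T1 - (u t - (eta t/m) *\<^sub>R E t)"
      by (simp add: e_def mu_S u_S T1_def)
    also have "\<dots> = e t - eta t *\<^sub>R ((1/m) *\<^sub>R (T1 - T2)) - eta t *\<^sub>R D t"
      unfolding D_eq e_def T2_def[symmetric] by (rule alg)
    also have "\<dots> = A t *v e t - eta t *\<^sub>R D t" using h1 by simp
    finally show ?thesis .
  qed
  have a_nn: "0 \<le> a r" for r
    unfolding a_def by (rule onorm_pos_le[OF bl_mv])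
  have bound: "norm (e t) \<le> (\<Sum>s<t. eta s * norm (D s) * (\<Prod>r\<in>{Suc s..<t}. a r))" for t
  proof (induct t)
    case 0
    then show ?case by (simp add: e_def mu_def u_def)
  next
    case (Suc t)
    have "norm (e (Suc t)) \<le> norm (A t *v e t) + norm (eta t *\<^sub>R D t)"
      unfolding step by (rule norm_triangle_ineq4)
    also have "\<dots> \<le> a t * norm (e t) + eta t * norm (D t)"
      using onorm[OF bl_mv, of "A t" "e t"] assms(3)[of t] by (simp add: a_def)
    also have "\<dots> \<le> a t * (\<Sum>s<t. eta s * norm (D s) * (\<Prod>r\<in>{Suc s..<t}. a r)) + eta t * norm (D t)"
      using Suc a_nn[of t] by (simp add: mult_left_mono)
    also have "\<dots> = (\<Sum>s<Suc t. eta s * norm (D s) * (\<Prod>r\<in>{Suc s..<Suc t}. a r))"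
    proof -
      have "(\<Sum>s<t. eta s * norm (D s) * (\<Prod>r\<in>{Suc s..<Suc t}. a r))
          = a t * (\<Sum>s<t. eta s * norm (D s) * (\<Prod>r\<in>{Suc s..<t}. a r))"
        by (simp add: sum_distrib_left prod.atLeastLessThan_Suc algebra_simps)
      then show ?thesis by simp
    qed
    finally show ?case .
  qed
  obtain k where tk: "t = Suc k" using assms(8) by (cases t) auto
  define H where "H = Max (eta ` {0..<t})"
  define DD where "DD = Max ((\<lambda>s. norm (D (s - 1))) ` {1..t})"
  define P where "P s = (\<Prod>r\<in>{Suc s..<t}. a r)" for s
  define g where "g s = (\<Prod>r\<in>{s..k}. a r)" for s
  have P_nn: "0 \<le> P s" for s unfolding P_def by (simp add: prod_nonneg a_nn)
  have etaH: "eta s \<le> H" if "s < t" for s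
    unfolding H_def using that by (intro Max_ge) auto
  have DDb: "norm (D s) \<le> DD" if "s < t" for s
  proof -
    have "Suc s \<in> {1..t}" using that by auto
    then have "norm (D (Suc s - 1)) \<le> DD" unfolding DD_def
      by (rule Max_ge[OF finite_imageI[OF finite_atLeastAtMost] imageI])
    then show ?thesis by simp
  qed
  have H_nn: "0 \<le> H" using etaH[of 0] assms(3)[of 0] tk by force
  have DD_nn: "0 \<le> DD" using DDb[of 0] tk by (meson norm_ge_zero order_trans zero_less_Suc)
  have sumP: "(\<Sum>s<t. P s) \<le> 1 + Max ((\<lambda>\<tau>. \<Sum>s\<in>{0..\<tau>}. \<Prod>r\<in>{s..\<tau>}. a r) ` {0..k})"
  proof -
    have "(\<Sum>s<t. P s) = (\<Sum>s<k. g (Suc s)) + 1"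
      unfolding tk P_def g_def by (simp add: atLeastLessThanSuc_atLeastAtMost)
    also have "(\<Sum>s<k. g (Suc s)) = sum g (Suc ` {..<k})"
      by (simp add: sum.reindex)
    also have "\<dots> \<le> sum g {0..k}"
      by (rule sum_mono2) (auto simp: g_def prod_nonneg a_nn)
    also have "sum g {0..k} \<le> Max ((\<lambda>\<tau>. \<Sum>s\<in>{0..\<tau>}. \<Prod>r\<in>{s..\<tau>}. a r) ` {0..k})"
      unfolding g_def by (intro Max_ge) auto
    finally show ?thesis by simp
  qed
  have "norm (e t) \<le> (\<Sum>s<t. eta s * norm (D s) * P s)"
    using bound unfolding P_def .
  also have "\<dots> \<le> (\<Sum>s<t. H * DD * P s)"
    apply (rule sum_mono)
    apply (rule mult_right_mono[OF _ P_nn])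
    apply (rule mult_mono)
    using etaH DDb H_nn by auto
  also have "\<dots> = H * DD * (\<Sum>s<t. P s)" by (simp add: sum_distrib_left)
  also have "\<dots> \<le> H * DD * (1 + Max ((\<lambda>\<tau>. \<Sum>s\<in>{0..\<tau>}. \<Prod>r\<in>{s..\<tau>}. a r) ` {0..k}))"
    by (rule mult_left_mono[OF sumP]) (simp add: H_nn DD_nn)
  finally have fin: "norm (e t) \<le> H * (1 + Max ((\<lambda>\<tau>. \<Sum>s\<in>{0..\<tau>}. \<Prod>r\<in>{s..\<tau>}. a r) ` {0..k})) * DD"
    by (simp add: algebra_simps)
  show ?thesis
    using fin unfolding e_def H_def DD_def D_def a_def A_def Mm_def frakM_def mu_def u_def X_def
    using tk by simp
qed

end
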